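(* Let $n \in \mathbb{N}_0$ and let $P(x) \in \mathbb{Z}[x]$ be a monic $n$-good polynomial of even degree. If $P(x) = A(x^2) - xB(x^2)$ for some $A(x), B(x) \in \mathbb{Z}[x]$, then $2^n$ divides $B(x)$ in $\mathbb{Z}[x]$.
   Context: For $P, Q, M \in \mathbb{Z}[x]$ with $M \ne 0$, $P \equiv Q \pmod{M}$ means $M$ divides $P - Q$ in $\mathbb{Z}[x]$. For $n \in \mathbb{N}_0$, a polynomial $P(x) \in \mathbb{Z}[x]$ is $n$-good if $P(x^{2^m}) \equiv P(x)^{2^m} \pmod{2^{m+1}}$ for every $m \in \{0, 1, \dots, n\}$. *)

theory Defs
  imports "HOL-Computational_Algebra.Polynomial"
begin

definition n_good :: "nat \<Rightarrow> int poly \<Rightarrow> bool" where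
  "n_good n P \<longleftrightarrow>
     (\<forall>m \<in> {0..n}. [:(2::int) ^ (m + 1):] dvd
        (pcompose P (monom 1 (2 ^ m)) - P ^ (2 ^ m)))"

end

theory Submission
  imports Defs
begin

lemma coeff_comp_monom:
  fixes p :: "int poly"
  assumes "N > 0"
  shows "coeff (pcompose p (monom 1 N)) k = (if N dvd k then coeff p (k div N) else 0)"
  using assms
proof (induction p arbitrary: k)
  case 0 then show ?case by simp
next
  case (pCons a p)
  have "coeff (pcompose (pCons a p) (monom 1 N)) k =
     (if k = 0 then a else 0) + (if k < N then 0 else coeff (pcompose p (monom 1 N)) (k - N))"
    by (simp add: pcompose_pCons coeff_monom_mult coeff_pCons split: nat.splits)
  also have "\<dots> = (if N dvd k then coeff (pCons a p) (k div N) else 0)"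
  proof (cases "k < N")
    case True
    then show ?thesis using pCons.prems by (auto simp: dvd_imp_le)
  next
    case False
    then have k0: "k \<noteq> 0" using pCons.prems by auto
    have d: "N dvd k \<longleftrightarrow> N dvd (k - N)" using False by (simp add: dvd_minus_self)
    have q: "N dvd k \<Longrightarrow> k div N = Suc ((k - N) div N)"
      using False pCons.prems by (metis Suc_eq_plus1 div_add_self2 le_add_diff_inverse2 not_less less_not_refl2)
    show ?thesis using False k0 pCons.IH[of "k - N"] pCons.prems d q by (auto simp: coeff_pCons)
  qed
  finally show ?case .
qed

lemma comp_power: "pcompose (p ^ n) q = (pcompose p q) ^ n"
  for p q :: "int poly"
proof (induction n)
  case 0 then show ?case by (metis pcompose_const one_pCons power_0)
qed (simp_all add: pcompose_mult)

lemma comp_monom_monom: "b > 0 \<Longrightarrow> pcompose (monom (1::int) a) (monom 1 b) = monom 1 (a * b)"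
  by (rule poly_eqI) (auto simp: coeff_comp_monom coeff_monom, metis dvd_triv_right)

lemma const_pow: "[:(a::int):] ^ n = [:a ^ n:]"
  by (induction n) auto

lemma comp_comp: "b > 0 \<Longrightarrow> pcompose (pcompose (p::int poly) (monom 1 a)) (monom 1 b) = pcompose p (monom 1 (a * b))"
  by (simp add: pcompose_assoc[symmetric] comp_monom_monom)

lemma comp_P: "N > 0 \<Longrightarrow> pcompose (pcompose A (monom 1 2) - monom 1 1 * pcompose B (monom 1 2)) (monom 1 N)
   = pcompose A (monom 1 (2*N)) - monom 1 N * pcompose (B::int poly) (monom 1 (2*N))"
  by (simp add: pcompose_diff pcompose_mult comp_comp comp_monom_monom)

lemma comp_tpow: "pcompose ([:c:]^k) q = ([:c:]^k :: int poly)"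
  by (simp add: comp_power)

lemma comp_const_pow: "pcompose ([:c:]^k * p) q = [:c:]^k * pcompose (p::int poly) q"
  by (simp add: pcompose_mult comp_power)

lemma two_poly: "(2::int poly) = [:2:]"
proof -
  have "[:2::int:] = [:1:] + [:1:]" by simp
  also have "\<dots> = 1 + 1" by (simp only: one_pCons)
  finally show ?thesis by simp
qed

lemma sq_lemma:
  fixes f g :: "int poly"
  assumes "j \<ge> 1" "[:2:]^j dvd f - g"
  shows "[:2:]^(j+1) dvd f^2 - g^2"
proof -
  obtain h where h: "f - g = [:2:]^j * h" using assms(2) by blast
  obtain j' where j': "j = Suc j'" using assms(1) by (cases j) auto
  have "f^2 - g^2 = [:2:]^j * h * ([:2:]^j * h + 2 * g)"
    using h by (simp add: algebra_simps power2_eq_square)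
  also have "\<dots> = [:2:]^(j+1) * (h * ([:2:]^j' * h + g))"
    unfolding two_poly j' by (simp add: algebra_simps)
  finally show ?thesis by (metis dvd_triv_left)
qed

lemma iter_lemma:
  fixes f g :: "int poly"
  assumes "j \<ge> 1" "[:2:]^j dvd f - g"
  shows "[:2:]^(j+i) dvd f^(2^i) - g^(2^i)"
proof (induction i)
  case 0 then show ?case using assms by simp
next
  case (Suc i)
  have "[:2:]^(j+i+1) dvd (f^(2^i))^2 - (g^(2^i))^2"
    by (rule sq_lemma) (use Suc assms in auto)
  then show ?case by (simp add: power_mult[symmetric] mult.commute)
qed

lemma sep_lemma:
  fixes h g :: "int poly"
  assumes "r > 0" "[:2:]^j dvd pcompose h (monom 1 (2*r)) + monom 1 r * pcompose g (monom 1 (2*r))"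
  shows "[:2:]^j dvd g"
proof -
  have d: "\<forall>n. 2^j dvd coeff (pcompose h (monom 1 (2*r)) + monom 1 r * pcompose g (monom 1 (2*r))) n"
    using assms(2) by (simp add: const_pow const_poly_dvd_iff)
  have "2^j dvd coeff g i" for i
  proof -
    have nd: "\<not> (2*r) dvd (2*r*i + r)"
    proof
      assume "(2*r) dvd (2*r*i + r)"
      then have "(2*r) dvd r" by (simp add: dvd_add_right_iff)
      then show False using assms(1) by (auto dest: dvd_imp_le)
    qed
    have "coeff (pcompose h (monom 1 (2*r)) + monom 1 r * pcompose g (monom 1 (2*r))) (2*r*i + r) = coeff g i"
      using assms(1) nd by (simp add: coeff_comp_monom coeff_monom_mult)
    then show ?thesis using d by metis
  qed
  then show ?thesis by (simp add: const_pow const_poly_dvd_iff)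
qed

lemma par_lemma:
  fixes A C :: "int poly"
  assumes "[:2:] dvd A * C" "\<not> [:2:] dvd A"
  shows "[:2:] dvd C"
proof -
  have "prime_elem [:2::int:]" by (simp add: prime_elem_const_poly_iff)
  then show ?thesis using assms prime_elem_dvd_mult_iff by blast
qed

lemma step_pos:
  fixes A B C P :: "int poly"
  assumes P: "P = pcompose A (monom 1 2) - monom 1 1 * pcompose B (monom 1 2)"
   and g1: "[:2:]^(k+1) dvd pcompose P (monom 1 (2^k)) - P^(2^k)"
   and g2: "[:2:]^(k+2) dvd pcompose P (monom 1 (2^(k+1))) - P^(2^(k+1))"
   and B: "B = [:2:]^k * C" and k: "k \<ge> 1"
  shows "[:2:] dvd A * C"
proof -
  define t where "t = [:2::int:]"
  define a where "a = pcompose A (monom 1 2)"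
  have PB: "P - a = - (monom 1 1 * (t^k * pcompose C (monom 1 2)))"
    using P B by (simp add: a_def t_def comp_const_pow)
  have d1: "t^k dvd P - a" unfolding PB by (simp add: dvd_mult)
  have e1: "t^(k+k) dvd P^(2^k) - a^(2^k)" using iter_lemma[OF k d1[unfolded t_def]] t_def by simp
  have e1': "t^(k+1) dvd P^(2^k) - a^(2^k)"
    by (rule dvd_trans[OF le_imp_power_dvd e1]) (use k in simp)
  have e2: "t^(k+(k+1)) dvd P^(2^(k+1)) - a^(2^(k+1))" using iter_lemma[OF k d1[unfolded t_def], of "k+1"] unfolding t_def .
  have e2': "t^(k+2) dvd P^(2^(k+1)) - a^(2^(k+1))"
    by (rule dvd_trans[OF le_imp_power_dvd e2]) (use k in simp)
  define N where "N = (2::nat)^(k+1)"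
  have N2: "2 * 2^k = N" "2 * N = 2^(k+2)" by (simp_all add: N_def)
  define F where "F = pcompose A (monom 1 N)"
  define G where "G = monom 1 (2^k) * pcompose C (monom 1 N)"
  have cP1: "pcompose P (monom 1 (2^k)) = F - t^k * G"
  proof -
    have "pcompose P (monom 1 (2^k)) = pcompose A (monom 1 (2*2^k)) - monom 1 (2^k) * pcompose B (monom 1 (2*2^k))"
      unfolding P by (rule comp_P) simp
    then show ?thesis by (simp only: N2 B comp_const_pow) (simp add: F_def G_def t_def algebra_simps)
  qed
  have "t^(k+1) dvd (F - t^k*G - P^(2^k)) + (P^(2^k) - a^(2^k))"
    using g1 e1' unfolding cP1 t_def by (rule dvd_add)
  then have "t^(k+1) dvd F - t^k*G - a^(2^k)" by (simp add: algebra_simps)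
  then obtain E where E: "F - t^k*G - a^(2^k) = t^(k+1)*E" by blast
  have aE: "a^(2^k) = F - t^k*G - t^(k+1)*E" using E by (simp add: algebra_simps)
  have cP2: "pcompose P (monom 1 N) = pcompose A (monom 1 (2^(k+2))) - monom 1 N * (t^k * pcompose C (monom 1 (2^(k+2))))"
  proof -
    have "pcompose P (monom 1 N) = pcompose A (monom 1 (2*N)) - monom 1 N * pcompose B (monom 1 (2*N))"
      unfolding P by (rule comp_P) (simp add: N_def)
    then show ?thesis by (simp only: N2 B comp_const_pow t_def)
  qed
  have d2: "t^(k+2) dvd (pcompose P (monom 1 N) - P^(2^(k+1))) + (P^(2^(k+1)) - a^(2^(k+1)))"
    using g2 e2' unfolding N_def t_def by (rule dvd_add)
  have sq: "a^(2^(k+1)) = (F - t^k*G - t^(k+1)*E)^2"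
  proof -
    have "a^(2^(k+1)) = (a^(2^k))^2" by (simp add: power_mult[symmetric] mult.commute)
    then show ?thesis by (simp only: aE)
  qed
  define h where "h = pcompose A (monom 1 2) - monom 1 1 * (t^k * pcompose C (monom 1 2)) - A^2 - t^k*t^k*(monom 1 1 * C^2)"
  have Npos: "N > 0" by (simp add: N_def)
  have hc: "pcompose h (monom 1 N) = pcompose A (monom 1 (2^(k+2))) - monom 1 N * (t^k * pcompose C (monom 1 (2^(k+2)))) - F^2 - t^k*t^k*G^2"
  proof -
    have G2: "G^2 = monom 1 N * (pcompose C (monom 1 N))^2"
      by (simp add: G_def power_mult_distrib monom_power N_def mult.commute[of "2::nat"])
    have c1: "pcompose (pcompose A (monom 1 2)) (monom 1 N) = pcompose A (monom 1 (2^(k+2)))"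
      using Npos by (simp add: comp_comp N_def)
    have c2: "pcompose (monom 1 1 * (t^k * pcompose C (monom 1 2))) (monom 1 N) = monom 1 N * (t^k * pcompose C (monom 1 (2^(k+2))))"
      using Npos unfolding t_def by (simp only: pcompose_mult comp_tpow comp_monom_monom comp_comp N2(2)[symmetric]) simp
    have c3: "pcompose (A^2) (monom 1 N) = F^2" by (simp add: comp_power F_def)
    have c4: "pcompose (t^k*t^k*(monom 1 1 * C^2)) (monom 1 N) = t^k*t^k*G^2"
      using Npos unfolding G2 t_def by (simp only: pcompose_mult comp_tpow comp_monom_monom comp_power) simp
    show ?thesis unfolding h_def pcompose_diff c1 c2 c3 c4 ..
  qed
  have FG: "F*G = monom 1 (2^k) * pcompose (A*C) (monom 1 N)"
    by (simp add: F_def G_def pcompose_mult algebra_simps)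
  have ident: "pcompose P (monom 1 N) - a^(2^(k+1)) =
      (pcompose h (monom 1 N) + monom 1 (2^k) * pcompose (t^(k+1)*(A*C)) (monom 1 N))
      - t^(k+2)*(t^k*E^2 - F*E + t^k*G*E)"
  proof -
    have "pcompose P (monom 1 N) - a^(2^(k+1)) = pcompose A (monom 1 (2^(k+2))) - monom 1 N * (t^k * pcompose C (monom 1 (2^(k+2)))) - (F - t^k*G - t^(k+1)*E)^2"
      by (simp only: cP2 sq)
    also have "\<dots> = (pcompose h (monom 1 N) + t^(k+1) * (F*G)) - t^(k+2)*(t^k*E^2 - F*E + t^k*G*E)"
      unfolding hc power_add t_def two_poly[symmetric] by (simp add: algebra_simps power2_eq_square)
    also have "\<dots> = (pcompose h (monom 1 N) + monom 1 (2^k) * pcompose (t^(k+1)*(A*C)) (monom 1 N))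
      - t^(k+2)*(t^k*E^2 - F*E + t^k*G*E)"
      unfolding FG t_def by (simp only: pcompose_mult[of "[:2:]^(k+1)"] comp_tpow) (simp add: algebra_simps)
    finally show ?thesis .
  qed
  have "t^(k+2) dvd (pcompose P (monom 1 N) - a^(2^(k+1))) + t^(k+2)*(t^k*E^2 - F*E + t^k*G*E)"
  proof -
    have d2': "t^(k+2) dvd pcompose P (monom 1 N) - a^(2^(k+1))" using d2 by simp
    show ?thesis by (rule dvd_add[OF d2' dvd_triv_left])
  qed
  then have "t^(k+2) dvd pcompose h (monom 1 (2 * 2^k)) + monom 1 (2^k) * pcompose (t^(k+1)*(A*C)) (monom 1 (2*2^k))"
    unfolding ident N2 by simp
  then have "t^(k+2) dvd t^(k+1)*(A*C)"
    unfolding t_def by (rule sep_lemma[rotated]) simp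
  then have "t^(k+1) * t dvd t^(k+1) * (A*C)" by (simp add: algebra_simps)
  then show ?thesis unfolding t_def by (subst (asm) dvd_times_left_cancel_iff) auto
qed

lemma step_zero:
  fixes A B P :: "int poly"
  assumes P: "P = pcompose A (monom 1 2) - monom 1 1 * pcompose B (monom 1 2)"
   and g: "[:2:]^2 dvd pcompose P (monom 1 2) - P^2"
  shows "[:2:] dvd A * B"
proof -
  define t where "t = [:2::int:]"
  define a where "a = pcompose A (monom 1 2)"
  define b where "b = pcompose B (monom 1 2)"
  have cP: "pcompose P (monom 1 2) = pcompose A (monom 1 4) - monom 1 2 * pcompose B (monom 1 4)"
    unfolding P using comp_P[of 2 A B] by simp
  define h where "h = pcompose A (monom 1 2) - monom 1 1 * pcompose B (monom 1 2) - A^2 - monom 1 1 * B^2"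
  have hc: "pcompose h (monom 1 2) = pcompose A (monom 1 4) - monom 1 2 * pcompose B (monom 1 4) - a^2 - monom 1 2 * b^2"
    unfolding h_def a_def b_def by (simp add: pcompose_diff pcompose_mult comp_comp comp_monom_monom comp_power)
  have X2: "monom (1::int) 1 * monom 1 1 = monom 1 2" by (simp add: mult_monom numeral_2_eq_2)
  have ident: "pcompose P (monom 1 2) - P^2 = pcompose h (monom 1 (2*1)) + monom 1 1 * pcompose (t*(A*B)) (monom 1 (2*1))"
  proof -
    have "pcompose P (monom 1 2) - P^2 = pcompose A (monom 1 4) - monom 1 2 * pcompose B (monom 1 4) - (a - monom 1 1 * b)^2"
      by (subst cP) (simp only: P a_def b_def)
    also have "\<dots> = pcompose h (monom 1 2) + monom 1 1 * (t * (a * b))"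
    proof -
      have sqx: "(a - monom 1 1 * b)^2 = a^2 - t * (monom 1 1 * (a*b)) + monom 1 2 * b^2"
        unfolding X2[symmetric] t_def two_poly[symmetric] by (simp add: algebra_simps power2_eq_square)
      show ?thesis unfolding hc sqx by (simp add: algebra_simps)
    qed
    also have "\<dots> = pcompose h (monom 1 (2*1)) + monom 1 1 * pcompose (t*(A*B)) (monom 1 (2*1))"
      unfolding t_def a_def b_def by (simp only: pcompose_mult pcompose_const mult_1 mult_1_right)
    finally show ?thesis .
  qed
  have "t^2 dvd t*(A*B)"
    using g unfolding ident t_def by (rule sep_lemma[rotated]) simp
  then have "t * t dvd t * (A*B)" by (simp add: power2_eq_square)
  then show ?thesis unfolding t_def by (subst (asm) dvd_times_left_cancel_iff) auto
qed

lemma not_dvd_A: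
  fixes A B P :: "int poly"
  assumes "lead_coeff P = 1" "even (degree P)"
    and P: "P = pcompose A (monom 1 2) - monom 1 1 * pcompose B (monom 1 2)"
  shows "\<not> [:2:] dvd A"
proof
  assume "[:2:] dvd A"
  then have ev: "\<And>i. 2 dvd coeff A i" by (simp add: const_poly_dvd_iff)
  define d where "d = degree P"
  have "coeff (monom 1 1 * pcompose B (monom 1 2)) d = 0"
    using assms(2) by (auto simp: coeff_monom_mult coeff_comp_monom d_def)
  then have "coeff P d = coeff A (d div 2)"
    using assms(2) by (simp add: P coeff_comp_monom d_def)
  then have "1 = coeff A (d div 2)" using assms(1) d_def by simp
  then show False using ev[of "d div 2"] by (metis odd_one)
qed

theorem lemma3p7:
  fixes n :: nat and P A B :: "int poly"
  assumes "lead_coeff P = 1"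
    and "n_good n P"
    and "even (degree P)"
    and "P = pcompose A (monom 1 2) - monom 1 1 * pcompose B (monom 1 2)"
  shows "[:(2::int) ^ n:] dvd B"
proof -
  have nA: "\<not> [:2:] dvd A" by (rule not_dvd_A[OF assms(1,3,4)])
  have good: "\<And>m. m \<le> n \<Longrightarrow> [:2:]^(m+1) dvd pcompose P (monom 1 (2^m)) - P^(2^m)"
  proof -
    fix m assume "m \<le> n"
    then have "[:(2::int)^(m+1):] dvd pcompose P (monom 1 (2^m)) - P^(2^m)"
      using assms(2) unfolding n_good_def by auto
    then show "[:2:]^(m+1) dvd pcompose P (monom 1 (2^m)) - P^(2^m)" by (simp only: const_pow)
  qed
  have "k \<le> n \<longrightarrow> [:2:]^k dvd B" for k
  proof (induction k)
    case 0 then show ?case by simp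
  next
    case (Suc k)
    show ?case
    proof
      assume k: "Suc k \<le> n"
      then obtain C where C: "B = [:2:]^k * C" using Suc.IH by auto
      have "[:2:] dvd C"
      proof (cases "k = 0")
        case True
        have n1: "1 \<le> n" using k by simp
        have g: "[:2:]^2 dvd pcompose P (monom 1 2) - P^2"
          using good[OF n1] by (simp only: one_add_one power_one_right)
        have AB: "[:2:] dvd A * B" by (rule step_zero[OF assms(4) g])
        have "B = C" using C True by simp
        then show ?thesis using par_lemma[OF _ nA] AB by blast
      next
        case False
        have kn: "k \<le> n" using k by simp
        have kn': "k + 1 \<le> n" using k by simp
        have g1: "[:2:]^(k+1) dvd pcompose P (monom 1 (2^k)) - P^(2^k)" using good[OF kn] .
        have g2: "[:2:]^(k+2) dvd pcompose P (monom 1 (2^(k+1))) - P^(2^(k+1))"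
          using good[OF kn'] by (simp only: add.assoc one_add_one)
        have k1: "k \<ge> 1" using False by simp
        have "[:2:] dvd A * C" by (rule step_pos[OF assms(4) g1 g2 C k1])
        then show ?thesis using par_lemma nA by blast
      qed
      then have "[:2:]^k * [:2:] dvd [:2:]^k * C" by (rule mult_dvd_mono[OF dvd_refl])
      then show "[:2:]^Suc k dvd B" unfolding C by (simp only: power_Suc2)
    qed
  qed
  then have "[:2:]^n dvd B" by blast
  then show ?thesis by (simp only: const_pow)
qed

end
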